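(* Let $X$ be a compactum, let $n\geq2$, and let $f:X\to X$ be a function. Consider the statements: (1) $f$ is fully exact; (2) $F_n(f)$ is fully exact; (3) $SF_n(f)$ is fully exact. Then (2) and (3) are equivalent, and (2) implies (1).
   Context: A compactum is a nondegenerate compact, perfect, Hausdorff topological space. $F_n(X)$ is the set of nonempty subsets of $X$ with at most $n$ points, with the Vietoris topology; $F_1(X)=\{\{x\}:x\in X\}$; $F_n(f)(A)=f(A)$. $SF_n(X)=F_n(X)/F_1(X)$ is the quotient collapsing $F_1(X)$ to a point, $q$ the quotient map, $F_X=q(F_1(X))$, and $SF_n(f)(\chi)=q(F_n(f)(q^{-1}(\chi)))$ for $\chi\neq F_X$, $SF_n(f)(F_X)=F_X$. A function $g:Z\to Z$ is fully exact if for every pair of nonempty open $U,V\subseteq Z$ there is $k\in\mathbb{N}$ with $\mathrm{int}(g^k(U)\cap g^k(V))\neq\emptyset$. *)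

theory Defs
  imports "HOL-Analysis.Analysis"
begin

definition compactum :: "'a topology \<Rightarrow> bool" where
  "compactum X \<longleftrightarrow>
     (\<exists>x\<in>topspace X. \<exists>y\<in>topspace X. x \<noteq> y) \<and>
     compact_space X \<and>
     (\<forall>x\<in>topspace X. \<not> openin X {x}) \<and>
     Hausdorff_space X"

definition Fn_set :: "'a topology \<Rightarrow> nat \<Rightarrow> 'a set set" where
  "Fn_set X n = {A. A \<subseteq> topspace X \<and> A \<noteq> {} \<and> finite A \<and> card A \<le> n}"

definition F1_set :: "'a topology \<Rightarrow> 'a set set" where
  "F1_set X = {{x} | x. x \<in> topspace X}"

text \<open>Vietoris topology on F_n(X): generated by the subbase
  <U> = {A. A \<subseteq> U} and [U] = {A. A \<inter> U \<noteq> {}} for U open in X,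
  restricted to F_n(X).\<close>
definition Fn_top :: "'a topology \<Rightarrow> nat \<Rightarrow> 'a set topology" where
  "Fn_top X n = subtopology
     (topology_generated_by
        ({{A. A \<subseteq> U} | U. openin X U} \<union> {{A. A \<inter> U \<noteq> {}} | U. openin X U}))
     (Fn_set X n)"

definition Fn_map :: "('a \<Rightarrow> 'a) \<Rightarrow> 'a set \<Rightarrow> 'a set" where
  "Fn_map f A = f ` A"

definition quotient_top :: "'a topology \<Rightarrow> ('a \<Rightarrow> 'b) \<Rightarrow> 'b topology" where
  "quotient_top T q = topology (\<lambda>V. V \<subseteq> q ` topspace T \<and> openin T {x \<in> topspace T. q x \<in> V})"

text \<open>The quotient map q : F_n(X) \<rightarrow> SF_n(X) collapsing F_1(X) to one point.
  Points of SF_n(X) are the equivalence classes: F_1(X) itself, and singletons {A} for A not in F_1(X).\<close>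
definition SF_q :: "'a topology \<Rightarrow> 'a set \<Rightarrow> 'a set set" where
  "SF_q X A = (if A \<in> F1_set X then F1_set X else {A})"

definition SF_top :: "'a topology \<Rightarrow> nat \<Rightarrow> 'a set set topology" where
  "SF_top X n = quotient_top (Fn_top X n) (SF_q X)"

definition SF_point :: "'a topology \<Rightarrow> 'a set set" where
  "SF_point X = F1_set X"

definition SF_map :: "'a topology \<Rightarrow> nat \<Rightarrow> ('a \<Rightarrow> 'a) \<Rightarrow> 'a set set \<Rightarrow> 'a set set" where
  "SF_map X n f c =
     (if c = SF_point X then SF_point X
      else SF_q X (Fn_map f (THE A. A \<in> Fn_set X n \<and> SF_q X A = c)))"

definition fully_exact :: "'b topology \<Rightarrow> ('b \<Rightarrow> 'b) \<Rightarrow> bool" where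
  "fully_exact Z g \<longleftrightarrow>
     (\<forall>U V. openin Z U \<and> U \<noteq> {} \<and> openin Z V \<and> V \<noteq> {} \<longrightarrow>
        (\<exists>k\<ge>1. Z interior_of ((g ^^ k) ` U \<inter> (g ^^ k) ` V) \<noteq> {}))"

end

theory Submission
  imports Defs
begin

abbreviation "SB X \<equiv> {{A. A \<subseteq> U} | U. openin X U} \<union> {{A. A \<inter> U \<noteq> {}} | U. openin X U}"

lemma gen_prop:
  assumes "generate_topology_on (SB X) s"
  shows "\<forall>A\<in>s. A \<subseteq> topspace X \<longrightarrow> (\<forall>a\<in>A. \<exists>G. openin X G \<and> a \<in> G \<and>
           (\<forall>Y. Y \<subseteq> G \<and> Y \<noteq> {} \<longrightarrow> (A - {a}) \<union> Y \<in> s))"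
  using assms
proof induction
  case Empty
  then show ?case by simp
next
  case (Int a b)
  show ?case
  proof (intro ballI impI)
    fix A x assume A: "A \<in> a \<inter> b" "A \<subseteq> topspace X" and x: "x \<in> A"
    have Aa: "A \<in> a" and Ab: "A \<in> b" using A(1) by auto
    obtain G1 where G1: "openin X G1" "x \<in> G1" "\<forall>Y. Y \<subseteq> G1 \<and> Y \<noteq> {} \<longrightarrow> (A - {x}) \<union> Y \<in> a"
      using Int.IH(1)[rule_format, OF Aa A(2) x] by (elim exE conjE) simp
    obtain G2 where G2: "openin X G2" "x \<in> G2" "\<forall>Y. Y \<subseteq> G2 \<and> Y \<noteq> {} \<longrightarrow> (A - {x}) \<union> Y \<in> b"
      using Int.IH(2)[rule_format, OF Ab A(2) x] by (elim exE conjE) simp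
    show "\<exists>G. openin X G \<and> x \<in> G \<and> (\<forall>Y. Y \<subseteq> G \<and> Y \<noteq> {} \<longrightarrow> A - {x} \<union> Y \<in> a \<inter> b)"
    proof (rule exI[of _ "G1 \<inter> G2"], intro conjI allI impI)
      show "openin X (G1 \<inter> G2)" using G1(1) G2(1) by (rule openin_Int)
      show "x \<in> G1 \<inter> G2" using G1(2) G2(2) by blast
      fix Y assume Y: "Y \<subseteq> G1 \<inter> G2 \<and> Y \<noteq> {}"
      have "A - {x} \<union> Y \<in> a" using G1(3)[rule_format, of Y] Y by blast
      moreover have "A - {x} \<union> Y \<in> b" using G2(3)[rule_format, of Y] Y by blast
      ultimately show "A - {x} \<union> Y \<in> a \<inter> b" by blast
    qed
  qed
next

  case (UN K)
  show ?case
  proof (intro ballI impI)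
    fix A x assume A: "A \<in> \<Union>K" "A \<subseteq> topspace X" and x: "x \<in> A"
    then obtain k where k: "k \<in> K" "A \<in> k" by blast
    obtain G where G: "openin X G" "x \<in> G" "\<forall>Y. Y \<subseteq> G \<and> Y \<noteq> {} \<longrightarrow> (A - {x}) \<union> Y \<in> k"
      using UN.IH[OF k(1), rule_format, OF k(2) A(2) x] by (elim exE conjE) simp
    have "\<forall>Y. Y \<subseteq> G \<and> Y \<noteq> {} \<longrightarrow> (A - {x}) \<union> Y \<in> \<Union>K"
      using G(3) k(1) by blast
    then show "\<exists>G. openin X G \<and> x \<in> G \<and> (\<forall>Y. Y \<subseteq> G \<and> Y \<noteq> {} \<longrightarrow> A - {x} \<union> Y \<in> \<Union>K)"
      using G(1,2) by blast
  qed
next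
  case (Basis s)
  show ?case
  proof (intro ballI impI)
    fix A x assume A: "A \<in> s" "A \<subseteq> topspace X" and x: "x \<in> A"
    show "\<exists>G. openin X G \<and> x \<in> G \<and> (\<forall>Y. Y \<subseteq> G \<and> Y \<noteq> {} \<longrightarrow> A - {x} \<union> Y \<in> s)"
    proof (cases "\<exists>U. openin X U \<and> s = {A. A \<subseteq> U}")
      case True
      then obtain U where U: "openin X U" "s = {A. A \<subseteq> U}" by blast
      have xU: "x \<in> U" using U(2) A(1) x by blast
      have "\<forall>Y. Y \<subseteq> U \<and> Y \<noteq> {} \<longrightarrow> A - {x} \<union> Y \<in> s" using U(2) A(1) by blast
      then show ?thesis using U(1) xU by blast
    next
      case False
      then obtain U where U: "openin X U" "s = {A. A \<inter> U \<noteq> {}}" using Basis by blast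
      show ?thesis
      proof (cases "(A - {x}) \<inter> U = {}")
        case True
        then have "x \<in> U" using U(2) A(1) by blast
        have "\<forall>Y. Y \<subseteq> U \<and> Y \<noteq> {} \<longrightarrow> A - {x} \<union> Y \<in> s" using U(2) by blast
        then show ?thesis using U(1) \<open>x \<in> U\<close> by blast
      next
        case False
        have "\<forall>Y. Y \<subseteq> topspace X \<and> Y \<noteq> {} \<longrightarrow> A - {x} \<union> Y \<in> s" using U(2) False by blast
        then show ?thesis using A(2) x by blast
      qed
    qed
  qed
qed

lemma Fn_top_topspace: "topspace (Fn_top X n) = Fn_set X n"
proof -
  have "Fn_set X n \<subseteq> \<Union>(SB X)"
  proof
    fix A assume "A \<in> Fn_set X n"
    then have "A \<in> {B. B \<subseteq> topspace X}" by (simp add: Fn_set_def)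
    moreover have "{B. B \<subseteq> topspace X} \<in> SB X" by blast
    ultimately show "A \<in> \<Union>(SB X)" by (rule UnionI[rotated])
  qed
  then show ?thesis unfolding Fn_top_def topspace_subtopology topology_generated_by_topspace
    by (rule Int_absorb1)
qed

lemma openin_Fn_top:
  "openin (Fn_top X n) W \<longleftrightarrow> (\<exists>s. generate_topology_on (SB X) s \<and> W = s \<inter> Fn_set X n)"
  unfolding Fn_top_def openin_subtopology openin_topology_generated_by_iff by (rule refl)

lemma Fn_nbhd:
  assumes "openin (Fn_top X n) W" "A \<in> W" "a \<in> A"
  shows "\<exists>G. openin X G \<and> a \<in> G \<and> (\<forall>Y. Y \<subseteq> G \<and> Y \<noteq> {} \<and> finite Y \<and> card ((A - {a}) \<union> Y) \<le> n
            \<longrightarrow> (A - {a}) \<union> Y \<in> W)"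
proof -
  obtain s where s: "generate_topology_on (SB X) s" "W = s \<inter> Fn_set X n"
    using assms(1)[unfolded openin_Fn_top] by (elim exE conjE)
  have AF: "A \<in> Fn_set X n" "A \<in> s" using s assms by auto
  have AT: "A \<subseteq> topspace X" "finite A" using AF(1) by (auto simp: Fn_set_def)
  obtain G where G: "openin X G" "a \<in> G" "\<forall>Y. Y \<subseteq> G \<and> Y \<noteq> {} \<longrightarrow> (A - {a}) \<union> Y \<in> s"
    using gen_prop[OF s(1), rule_format, OF AF(2) AT(1) assms(3)] by (elim exE conjE) simp
  have "G \<subseteq> topspace X" using G(1) openin_subset by blast
  show ?thesis
  proof (rule exI[of _ G], intro conjI G(1,2) allI impI)
    fix Y assume Y: "Y \<subseteq> G \<and> Y \<noteq> {} \<and> finite Y \<and> card ((A - {a}) \<union> Y) \<le> n"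
    have "(A - {a}) \<union> Y \<in> Fn_set X n"
      unfolding Fn_set_def using Y \<open>G \<subseteq> topspace X\<close> AT by auto
    moreover have "(A - {a}) \<union> Y \<in> s" using G(3)[rule_format, of Y] Y by blast
    ultimately show "(A - {a}) \<union> Y \<in> W" using s(2) by blast
  qed
qed

lemma openin_Fn_basic1: "openin X U \<Longrightarrow> openin (Fn_top X n) ({A. A \<subseteq> U} \<inter> Fn_set X n)"
proof -
  assume "openin X U"
  then have "{A. A \<subseteq> U} \<in> SB X" by (intro UnI1 CollectI exI[of _ U] conjI refl)
  then show ?thesis unfolding openin_Fn_top
    by (intro exI[of _ "{A. A \<subseteq> U}"] conjI generate_topology_on.Basis refl)
qed

lemma openin_Fn_basic2: "openin X U \<Longrightarrow> openin (Fn_top X n) ({A. A \<inter> U \<noteq> {}} \<inter> Fn_set X n)"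
proof -
  assume "openin X U"
  then have "{A. A \<inter> U \<noteq> {}} \<in> SB X" by (intro UnI2 CollectI exI[of _ U] conjI refl)
  then show ?thesis unfolding openin_Fn_top
    by (intro exI[of _ "{A. A \<inter> U \<noteq> {}}"] conjI generate_topology_on.Basis refl)
qed

lemma Fn_map_pow: "(Fn_map f ^^ k) A = Fn_map (f ^^ k) A"
  by (induction k arbitrary: A) (auto simp: Fn_map_def image_comp)

lemma interior_ne: "Z interior_of S \<noteq> {} \<longleftrightarrow> (\<exists>W. openin Z W \<and> W \<noteq> {} \<and> W \<subseteq> S)"
  by (metis interior_of_maximal interior_of_subset openin_interior_of subset_empty)


lemma F1_sub: "n \<ge> 1 \<Longrightarrow> F1_set X \<subseteq> Fn_set X n"
  by (auto simp: F1_set_def Fn_set_def)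

lemma Fn_map_Fn_set:
  assumes "f ` topspace X \<subseteq> topspace X" "A \<in> Fn_set X n"
  shows "Fn_map f A \<in> Fn_set X n"
  using assms card_image_le[of A f] unfolding Fn_set_def Fn_map_def by auto

lemma Fn_map_pow_Fn_set:
  assumes "f ` topspace X \<subseteq> topspace X" "A \<in> Fn_set X n"
  shows "(Fn_map f ^^ k) A \<in> Fn_set X n"
  by (induction k) (use assms Fn_map_Fn_set in auto)

lemma SF_q_notF1: "A \<notin> F1_set X \<Longrightarrow> SF_q X A = {A}"
  by (simp add: SF_q_def)

lemma singleton_ne_F1: "A \<notin> F1_set X \<Longrightarrow> {A} \<noteq> F1_set X"
  by auto

lemma SF_q_eq_single:
  assumes "A \<notin> F1_set X" "SF_q X B = {A}"
  shows "B = A"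
  using assms by (auto simp: SF_q_def split: if_splits)

lemma SF_map_q:
  assumes "f ` topspace X \<subseteq> topspace X" "A \<in> Fn_set X n"
  shows "SF_map X n f (SF_q X A) = SF_q X (Fn_map f A)"
proof (cases "A \<in> F1_set X")
  case True
  then obtain x where x: "A = {x}" "x \<in> topspace X" by (auto simp: F1_set_def)
  then have "Fn_map f A \<in> F1_set X" using assms(1) by (auto simp: F1_set_def Fn_map_def)
  then show ?thesis using True by (simp add: SF_map_def SF_q_def SF_point_def)
next
  case False
  have "(THE B. B \<in> Fn_set X n \<and> SF_q X B = SF_q X A) = A"
  proof (rule the_equality)
    show "A \<in> Fn_set X n \<and> SF_q X A = SF_q X A" using assms by simp
  next
    fix B assume "B \<in> Fn_set X n \<and> SF_q X B = SF_q X A"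
    then show "B = A" using SF_q_eq_single[OF False] SF_q_notF1[OF False] by metis
  qed
  moreover have "SF_q X A \<noteq> SF_point X" using singleton_ne_F1[OF False] by (simp add: SF_q_notF1[OF False] SF_point_def)
  ultimately show ?thesis using singleton_ne_F1[OF False] by (simp add: SF_map_def)
qed

lemma SF_map_pow_q:
  assumes "f ` topspace X \<subseteq> topspace X" "A \<in> Fn_set X n"
  shows "(SF_map X n f ^^ k) (SF_q X A) = SF_q X ((Fn_map f ^^ k) A)"
proof (induction k)
  case 0
  then show ?case by simp
next
  case (Suc k)
  then show ?case using SF_map_q[OF assms(1) Fn_map_pow_Fn_set[OF assms, of k]] by simp
qed

lemma SF_image_pow:
  assumes "f ` topspace X \<subseteq> topspace X" "U \<subseteq> Fn_set X n"
  shows "(SF_map X n f ^^ k) ` (SF_q X ` U) = SF_q X ` ((Fn_map f ^^ k) ` U)"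
  using SF_map_pow_q[OF assms(1)] assms(2) by (force simp: image_iff)

lemma openin_SF_top:
  "openin (SF_top X n) V \<longleftrightarrow> V \<subseteq> SF_q X ` Fn_set X n \<and>
     openin (Fn_top X n) {x \<in> Fn_set X n. SF_q X x \<in> V}"
proof -
  let ?P = "\<lambda>V. V \<subseteq> SF_q X ` topspace (Fn_top X n) \<and>
      openin (Fn_top X n) {x \<in> topspace (Fn_top X n). SF_q X x \<in> V}"
  have "istopology ?P"
    unfolding istopology_def
  proof (rule conjI; intro allI impI)
    fix S T assume "?P S" "?P T"
    moreover have "{x \<in> topspace (Fn_top X n). SF_q X x \<in> S \<inter> T} =
       {x \<in> topspace (Fn_top X n). SF_q X x \<in> S} \<inter> {x \<in> topspace (Fn_top X n). SF_q X x \<in> T}" by auto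
    ultimately show "?P (S \<inter> T)" by auto
  next
    fix K assume K: "\<forall>S\<in>K. ?P S"
    have "{x \<in> topspace (Fn_top X n). SF_q X x \<in> \<Union>K} =
       \<Union>((\<lambda>S. {x \<in> topspace (Fn_top X n). SF_q X x \<in> S}) ` K)" by auto
    moreover have "openin (Fn_top X n) (\<Union>((\<lambda>S. {x \<in> topspace (Fn_top X n). SF_q X x \<in> S}) ` K))"
      using K by (intro openin_Union) auto
    ultimately show "?P (\<Union>K)" using K by auto
  qed
  then have "openin (SF_top X n) = ?P" unfolding SF_top_def quotient_top_def
    by (rule topology_inverse')
  then show ?thesis by (simp add: Fn_top_topspace)
qed

lemma SF_open_image:
  assumes "openin (Fn_top X n) W" "W \<inter> F1_set X = {}"
  shows "openin (SF_top X n) (SF_q X ` W)"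
proof -
  have W: "W \<subseteq> Fn_set X n" using openin_subset[OF assms(1)] Fn_top_topspace by metis
  have "{x \<in> Fn_set X n. SF_q X x \<in> SF_q X ` W} = W"
  proof
    show "{x \<in> Fn_set X n. SF_q X x \<in> SF_q X ` W} \<subseteq> W"
    proof
      fix x assume "x \<in> {x \<in> Fn_set X n. SF_q X x \<in> SF_q X ` W}"
      then obtain w where w: "w \<in> W" "SF_q X x = SF_q X w" by auto
      then have "w \<notin> F1_set X" using assms(2) by auto
      then have "x = w" using SF_q_eq_single w SF_q_notF1 by metis
      then show "x \<in> W" using w by simp
    qed
  qed (use W in auto)
  then show ?thesis unfolding openin_SF_top using W assms(1) by auto
qed

lemma F1_closed:
  assumes "Hausdorff_space X"
  shows "openin (Fn_top X n) (Fn_set X n - F1_set X)"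
proof (subst openin_subopen, intro ballI)
  fix A assume A: "A \<in> Fn_set X n - F1_set X"
  then have Asub: "A \<subseteq> topspace X" "A \<noteq> {}" by (auto simp: Fn_set_def)
  then obtain a where a: "a \<in> A" by blast
  have "A \<noteq> {a}" using A a Asub by (auto simp: F1_set_def)
  then obtain b where b: "b \<in> A" "b \<noteq> a" using a by blast
  obtain Ua Ub where U: "openin X Ua" "openin X Ub" "a \<in> Ua" "b \<in> Ub" "disjnt Ua Ub"
    using assms Asub a b unfolding Hausdorff_space_def by (metis subsetD)
  let ?T = "({B. B \<inter> Ua \<noteq> {}} \<inter> Fn_set X n) \<inter> ({B. B \<inter> Ub \<noteq> {}} \<inter> Fn_set X n)"
  have "openin (Fn_top X n) ?T" using openin_Fn_basic2[OF U(1), of n] openin_Fn_basic2[OF U(2), of n] by (rule openin_Int)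
  moreover have "A \<in> ?T" using A a b U by auto
  moreover have "?T \<subseteq> Fn_set X n - F1_set X"
  proof
    fix B assume B: "B \<in> ?T"
    show "B \<in> Fn_set X n - F1_set X"
    proof (rule ccontr)
      assume "B \<notin> Fn_set X n - F1_set X"
      then obtain x where "B = {x}" using B by (auto simp: F1_set_def)
      then show False using B U(5) by (auto simp: disjnt_def)
    qed
  qed
  ultimately show "\<exists>T. openin (Fn_top X n) T \<and> A \<in> T \<and> T \<subseteq> Fn_set X n - F1_set X" by blast
qed

lemma F1_no_interior:
  assumes "\<forall>x\<in>topspace X. \<not> openin X {x}" "n \<ge> 2" "openin (Fn_top X n) W" "W \<noteq> {}"
  shows "W - F1_set X \<noteq> {}"
proof -
  obtain A where A: "A \<in> W" using assms by blast
  show ?thesis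
  proof (cases "A \<in> F1_set X")
    case False
    then show ?thesis using A by blast
  next
    case True
    then obtain a where a: "A = {a}" "a \<in> topspace X" by (auto simp: F1_set_def)
    obtain G where G: "openin X G" "a \<in> G" "\<forall>Y. Y \<subseteq> G \<and> Y \<noteq> {} \<and> finite Y \<and> card ((A - {a}) \<union> Y) \<le> n
            \<longrightarrow> (A - {a}) \<union> Y \<in> W"
      using Fn_nbhd[OF assms(3) A, of a] a by auto
    have "G \<noteq> {a}" using assms(1) a G by metis
    then obtain y where y: "y \<in> G" "y \<noteq> a" using G(2) by blast
    have "card {a, y} \<le> n" using y assms(2) by simp
    then have "{a, y} \<in> W" using G(3)[rule_format, of "{a,y}"] G(2) y a by auto
    moreover have "{a, y} \<notin> F1_set X" using y by (auto simp: F1_set_def doubleton_eq_iff)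
    ultimately show ?thesis by blast
  qed
qed


lemma fully_exactD:
  assumes "fully_exact Z g" "openin Z U" "U \<noteq> {}" "openin Z V" "V \<noteq> {}"
  obtains k W where "k \<ge> 1" "openin Z W" "W \<noteq> {}" "W \<subseteq> (g ^^ k) ` U \<inter> (g ^^ k) ` V"
proof -
  have "\<exists>k\<ge>1. Z interior_of ((g ^^ k) ` U \<inter> (g ^^ k) ` V) \<noteq> {}"
    using assms unfolding fully_exact_def by blast
  then obtain k where k: "k \<ge> 1" "Z interior_of ((g ^^ k) ` U \<inter> (g ^^ k) ` V) \<noteq> {}"
    by (elim exE conjE)
  from k(2) have "\<exists>W. openin Z W \<and> W \<noteq> {} \<and> W \<subseteq> (g ^^ k) ` U \<inter> (g ^^ k) ` V"
    by (rule iffD1[OF interior_ne])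
  then obtain W where "openin Z W" "W \<noteq> {}" "W \<subseteq> (g ^^ k) ` U \<inter> (g ^^ k) ` V"
    by (elim exE conjE)
  then show ?thesis using that k(1) by blast
qed

lemma fully_exactI:
  assumes "\<And>U V. openin Z U \<Longrightarrow> U \<noteq> {} \<Longrightarrow> openin Z V \<Longrightarrow> V \<noteq> {} \<Longrightarrow>
     \<exists>k W. k \<ge> 1 \<and> openin Z W \<and> W \<noteq> {} \<and> W \<subseteq> (g ^^ k) ` U \<inter> (g ^^ k) ` V"
  shows "fully_exact Z g"
  unfolding fully_exact_def
proof (intro allI impI)
  fix U V assume UV: "openin Z U \<and> U \<noteq> {} \<and> openin Z V \<and> V \<noteq> {}"
  then obtain k W where kW: "k \<ge> 1" "openin Z W" "W \<noteq> {}" "W \<subseteq> (g ^^ k) ` U \<inter> (g ^^ k) ` V"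
    using assms[of U V] by (elim conjE exE) blast
  have "Z interior_of ((g ^^ k) ` U \<inter> (g ^^ k) ` V) \<noteq> {}"
    by (rule iffD2[OF interior_ne]) (use kW in blast)
  then show "\<exists>k\<ge>1. Z interior_of ((g ^^ k) ` U \<inter> (g ^^ k) ` V) \<noteq> {}" using kW(1) by blast
qed

lemma Fn_to_X:
  assumes "n \<ge> 1" "fully_exact (Fn_top X n) (Fn_map f)"
  shows "fully_exact X f"
proof (rule fully_exactI)
  fix U V assume U: "openin X U" "U \<noteq> {}" and V: "openin X V" "V \<noteq> {}"
  let ?U = "{A. A \<subseteq> U} \<inter> Fn_set X n" and ?V = "{A. A \<subseteq> V} \<inter> Fn_set X n"
  have oU: "openin (Fn_top X n) ?U" using openin_Fn_basic1[OF U(1)] .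
  have oV: "openin (Fn_top X n) ?V" using openin_Fn_basic1[OF V(1)] .
  obtain u where u: "u \<in> U" using U(2) by blast
  obtain v where v: "v \<in> V" using V(2) by blast
  have "u \<in> topspace X" using u openin_subset[OF U(1)] by blast
  then have "{u} \<in> ?U" using u assms(1) by (simp add: Fn_set_def)
  then have neU: "?U \<noteq> {}" by blast
  have "v \<in> topspace X" using v openin_subset[OF V(1)] by blast
  then have "{v} \<in> ?V" using v assms(1) by (simp add: Fn_set_def)
  then have neV: "?V \<noteq> {}" by blast
  obtain k W where W: "k \<ge> 1" "openin (Fn_top X n) W" "W \<noteq> {}"
      "W \<subseteq> (Fn_map f ^^ k) ` ?U \<inter> (Fn_map f ^^ k) ` ?V"
    using fully_exactD[OF assms(2) oU neU oV neV] by blast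
  obtain A where A: "A \<in> W" using W(3) by blast
  have AF: "A \<in> Fn_set X n" using openin_subset[OF W(2)] A Fn_top_topspace by blast
  then have finA: "finite A" "card A \<le> n" "A \<noteq> {}" by (simp_all add: Fn_set_def)
  then obtain a where a: "a \<in> A" by blast
  obtain G where G: "openin X G" "a \<in> G" "\<forall>Y. Y \<subseteq> G \<and> Y \<noteq> {} \<and> finite Y \<and> card ((A - {a}) \<union> Y) \<le> n
            \<longrightarrow> (A - {a}) \<union> Y \<in> W"
    using Fn_nbhd[OF W(2) A a] by (elim exE conjE) simp
  have "G \<subseteq> (f ^^ k) ` U \<inter> (f ^^ k) ` V"
  proof
    fix y assume y: "y \<in> G"
    have c1: "card (insert y (A - {a})) \<le> Suc (card (A - {a}))" by (rule card_insert_le_m1) simp_all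
    have c2: "Suc (card (A - {a})) = card A" by (rule card_Suc_Diff1[OF finA(1) a])
    have "card ((A - {a}) \<union> {y}) \<le> n" using c1 c2 finA(2) by simp
    then have "(A - {a}) \<union> {y} \<in> W" using G(3)[rule_format, of "{y}"] y by simp
    then have yin: "(A - {a}) \<union> {y} \<in> (Fn_map f ^^ k) ` ?U" "(A - {a}) \<union> {y} \<in> (Fn_map f ^^ k) ` ?V"
      using W(4) by blast+
    obtain B1 where B1: "B1 \<in> ?U" "(A - {a}) \<union> {y} = (Fn_map f ^^ k) B1" using yin(1) by (elim imageE) simp
    have "y \<in> (f ^^ k) ` B1" using B1(2) unfolding Fn_map_pow Fn_map_def by blast
    then have y1: "y \<in> (f ^^ k) ` U" using B1(1) by blast
    obtain B2 where B2: "B2 \<in> ?V" "(A - {a}) \<union> {y} = (Fn_map f ^^ k) B2" using yin(2) by (elim imageE) simp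
    have "y \<in> (f ^^ k) ` B2" using B2(2) unfolding Fn_map_pow Fn_map_def by blast
    then have y2: "y \<in> (f ^^ k) ` V" using B2(1) by blast
    show "y \<in> (f ^^ k) ` U \<inter> (f ^^ k) ` V" using y1 y2 by blast
  qed
  then show "\<exists>k W. k \<ge> 1 \<and> openin X W \<and> W \<noteq> {} \<and> W \<subseteq> (f ^^ k) ` U \<inter> (f ^^ k) ` V"
    using G(1,2) W(1) by blast
qed

lemma remove_F1:
  assumes "Hausdorff_space X" "\<forall>x\<in>topspace X. \<not> openin X {x}" "n \<ge> 2"
    "openin (Fn_top X n) W" "W \<noteq> {}"
  shows "openin (Fn_top X n) (W - F1_set X)" "W - F1_set X \<noteq> {}" "(W - F1_set X) \<inter> F1_set X = {}"
proof -
  have "W \<subseteq> Fn_set X n" using openin_subset[OF assms(4)] unfolding Fn_top_topspace .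
  then have "W - F1_set X = W \<inter> (Fn_set X n - F1_set X)" by blast
  moreover have "openin (Fn_top X n) (W \<inter> (Fn_set X n - F1_set X))"
    using assms(4) F1_closed[OF assms(1)] by (rule openin_Int)
  ultimately show "openin (Fn_top X n) (W - F1_set X)" by simp
  show "W - F1_set X \<noteq> {}" using F1_no_interior[OF assms(2,3,4,5)] .
  show "(W - F1_set X) \<inter> F1_set X = {}" by blast
qed

lemma Fn_to_SF:
  assumes "Hausdorff_space X" "\<forall>x\<in>topspace X. \<not> openin X {x}" "n \<ge> 2"
    "f ` topspace X \<subseteq> topspace X" "fully_exact (Fn_top X n) (Fn_map f)"
  shows "fully_exact (SF_top X n) (SF_map X n f)"
proof (rule fully_exactI)
  fix U' V' assume U': "openin (SF_top X n) U'" "U' \<noteq> {}" and V': "openin (SF_top X n) V'" "V' \<noteq> {}"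
  let ?U = "{x \<in> Fn_set X n. SF_q X x \<in> U'}" and ?V = "{x \<in> Fn_set X n. SF_q X x \<in> V'}"
  have oU: "openin (Fn_top X n) ?U" and subU: "U' \<subseteq> SF_q X ` Fn_set X n"
    using U'(1) unfolding openin_SF_top by blast+
  have oV: "openin (Fn_top X n) ?V" and subV: "V' \<subseteq> SF_q X ` Fn_set X n"
    using V'(1) unfolding openin_SF_top by blast+
  have qU: "SF_q X ` ?U = U'" using subU by blast
  have qV: "SF_q X ` ?V = V'" using subV by blast
  have neU: "?U \<noteq> {}" using qU U'(2) by blast
  have neV: "?V \<noteq> {}" using qV V'(2) by blast
  obtain k W where W: "k \<ge> 1" "openin (Fn_top X n) W" "W \<noteq> {}"
      "W \<subseteq> (Fn_map f ^^ k) ` ?U \<inter> (Fn_map f ^^ k) ` ?V"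
    using fully_exactD[OF assms(5) oU neU oV neV] by blast
  note R = remove_F1[OF assms(1-3) W(2,3)]
  have o: "openin (SF_top X n) (SF_q X ` (W - F1_set X))" using SF_open_image[OF R(1) R(3)] .
  have ne: "SF_q X ` (W - F1_set X) \<noteq> {}" using R(2) by blast
  have e1: "(SF_map X n f ^^ k) ` U' = SF_q X ` ((Fn_map f ^^ k) ` ?U)"
    using SF_image_pow[OF assms(4), of ?U n k] qU by simp
  have e2: "(SF_map X n f ^^ k) ` V' = SF_q X ` ((Fn_map f ^^ k) ` ?V)"
    using SF_image_pow[OF assms(4), of ?V n k] qV by simp
  have "SF_q X ` (W - F1_set X) \<subseteq> (SF_map X n f ^^ k) ` U' \<inter> (SF_map X n f ^^ k) ` V'"
    unfolding e1 e2 using W(4) by blast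
  then show "\<exists>k W. k \<ge> 1 \<and> openin (SF_top X n) W \<and> W \<noteq> {} \<and>
      W \<subseteq> (SF_map X n f ^^ k) ` U' \<inter> (SF_map X n f ^^ k) ` V'"
    using o ne W(1) by blast
qed

lemma SF_to_Fn:
  assumes "Hausdorff_space X" "\<forall>x\<in>topspace X. \<not> openin X {x}" "n \<ge> 2"
    "f ` topspace X \<subseteq> topspace X" "fully_exact (SF_top X n) (SF_map X n f)"
  shows "fully_exact (Fn_top X n) (Fn_map f)"
proof (rule fully_exactI)
  fix U V assume U: "openin (Fn_top X n) U" "U \<noteq> {}" and V: "openin (Fn_top X n) V" "V \<noteq> {}"
  note RU = remove_F1[OF assms(1-3) U] and RV = remove_F1[OF assms(1-3) V]
  let ?U = "U - F1_set X" and ?V = "V - F1_set X"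
  have UF: "?U \<subseteq> Fn_set X n" using openin_subset[OF U(1)] unfolding Fn_top_topspace by blast
  have VF: "?V \<subseteq> Fn_set X n" using openin_subset[OF V(1)] unfolding Fn_top_topspace by blast
  have oU: "openin (SF_top X n) (SF_q X ` ?U)" using SF_open_image[OF RU(1) RU(3)] .
  have oV: "openin (SF_top X n) (SF_q X ` ?V)" using SF_open_image[OF RV(1) RV(3)] .
  have neU: "SF_q X ` ?U \<noteq> {}" using RU(2) by blast
  have neV: "SF_q X ` ?V \<noteq> {}" using RV(2) by blast
  obtain k W' where W': "k \<ge> 1" "openin (SF_top X n) W'" "W' \<noteq> {}"
      "W' \<subseteq> (SF_map X n f ^^ k) ` (SF_q X ` ?U) \<inter> (SF_map X n f ^^ k) ` (SF_q X ` ?V)"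
    using fully_exactD[OF assms(5) oU neU oV neV] by blast
  have W'sub: "W' \<subseteq> SF_q X ` ((Fn_map f ^^ k) ` ?U) \<inter> SF_q X ` ((Fn_map f ^^ k) ` ?V)"
    using W'(4) unfolding SF_image_pow[OF assms(4) UF] SF_image_pow[OF assms(4) VF] .
  let ?W = "{x \<in> Fn_set X n. SF_q X x \<in> W'}"
  have oW: "openin (Fn_top X n) ?W" and W'q: "W' \<subseteq> SF_q X ` Fn_set X n"
    using W'(2) unfolding openin_SF_top by blast+
  have neW: "?W \<noteq> {}" using W'(3) W'q by blast
  note RW = remove_F1[OF assms(1-3) oW neW]
  have "?W - F1_set X \<subseteq> (Fn_map f ^^ k) ` U \<inter> (Fn_map f ^^ k) ` V"
  proof
    fix B assume B: "B \<in> ?W - F1_set X"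
    then have BnF: "B \<notin> F1_set X" by blast
    have qB: "SF_q X B = {B}" using SF_q_notF1[OF BnF] .
    have inW: "{B} \<in> W'" using B qB by auto
    have "{B} \<in> SF_q X ` ((Fn_map f ^^ k) ` ?U)" using inW W'sub by blast
    then obtain C where C2: "{B} = SF_q X C" and C1: "C \<in> (Fn_map f ^^ k) ` ?U" by (rule imageE)
    note C = C1 C2
    have "C = B" using SF_q_eq_single[OF BnF C(2)[symmetric]] .
    then have b1: "B \<in> (Fn_map f ^^ k) ` U" using C(1) by blast
    have "{B} \<in> SF_q X ` ((Fn_map f ^^ k) ` ?V)" using inW W'sub by blast
    then obtain D where D2: "{B} = SF_q X D" and D1: "D \<in> (Fn_map f ^^ k) ` ?V" by (rule imageE)
    note D = D1 D2
    have "D = B" using SF_q_eq_single[OF BnF D(2)[symmetric]] .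
    then have b2: "B \<in> (Fn_map f ^^ k) ` V" using D(1) by blast
    show "B \<in> (Fn_map f ^^ k) ` U \<inter> (Fn_map f ^^ k) ` V" using b1 b2 by blast
  qed
  then show "\<exists>k W. k \<ge> 1 \<and> openin (Fn_top X n) W \<and> W \<noteq> {} \<and>
      W \<subseteq> (Fn_map f ^^ k) ` U \<inter> (Fn_map f ^^ k) ` V"
    using RW(1,2) W'(1) by blast
qed

theorem theorem23:
  fixes X :: "'a topology" and n :: nat and f :: "'a \<Rightarrow> 'a"
  assumes "compactum X" and "n \<ge> 2" and "f ` topspace X \<subseteq> topspace X"
  shows "(fully_exact (Fn_top X n) (Fn_map f) \<longleftrightarrow> fully_exact (SF_top X n) (SF_map X n f))
       \<and> (fully_exact (Fn_top X n) (Fn_map f) \<longrightarrow> fully_exact X f)"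
proof -
  have H1: "Hausdorff_space X" using assms(1) unfolding compactum_def by blast
  have H2: "\<forall>x\<in>topspace X. \<not> openin X {x}" using assms(1) unfolding compactum_def by blast
  have n1: "n \<ge> 1" using assms(2) by simp
  show ?thesis
    using Fn_to_SF[OF H1 H2 assms(2,3)] SF_to_Fn[OF H1 H2 assms(2,3)] Fn_to_X[OF n1, of X f] by blast
qed

end
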